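(* Let $n\ge 0$. For a noncrossing linked partition $\pi$ of $[n+1]$, define a lattice path $\phi(\pi)$ starting at $(0,0)$ with steps $N=(0,1)$, $E=(1,0)$, $D=(1,1)$ as follows. For $i=0,1,\dots,n-1$ in turn (the path being on the vertical line $x=i$): Step 1: if $i+1$ is the minimum of a block $B$ of $\pi$ with $|B|=k$, perform $k-1$ $N$-steps (otherwise perform none); Step 2: perform one $D$-step if $i+2$ is a singly covered minimal element of $\pi$, and one $E$-step otherwise. Then $\phi(\pi)$ is a Schröder path of length $n$, and $\phi$ is a bijection from the set of noncrossing linked partitions of $[n+1]$ to the set of Schröder paths of length $n$.
   Context: Two finite sets of integers $E,F$ are nearly disjoint if for every $i\in E\cap F$ either ($i=\min(E)$, $|E|>1$, $i\ne\min(F)$) or ($i=\min(F)$, $|F|>1$, $i\ne\min(E)$). A linked partition of $[n]$ is a set of nonempty subsets (blocks) of $[n]$ with union $[n]$, any two distinct blocks nearly disjoint; it is noncrossing if there are no two distinct blocks $B,B'$ and $a,c\in B$, $b,d\in B'$ with $a<b<c<d$. In a linked partition each element lies in exactly one or exactly two blocks; it is called singly covered or doubly covered accordingly. An element $i$ is a minimal element of $\pi$ if it is the minimum of some block; it is a singly covered minimal element if in addition it is singly covered. A Schröder path of length $n$ is a lattice path from $(0,0)$ to $(n,n)$ with steps $(1,0)$, $(0,1)$, $(1,1)$ that never goes below the line $y=x$. *)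

theory Defs
  imports Main
begin

definition nearly_disjoint :: "nat set \<Rightarrow> nat set \<Rightarrow> bool" where
  "nearly_disjoint E F \<longleftrightarrow>
     (\<forall>i \<in> E \<inter> F.
        (i = Min E \<and> card E > 1 \<and> i \<noteq> Min F) \<or>
        (i = Min F \<and> card F > 1 \<and> i \<noteq> Min E))"

definition linked_partition :: "nat \<Rightarrow> nat set set \<Rightarrow> bool" where
  "linked_partition n \<pi> \<longleftrightarrow>
     (\<forall>B \<in> \<pi>. B \<noteq> {} \<and> B \<subseteq> {1..n}) \<and>
     \<Union>\<pi> = {1..n} \<and>
     (\<forall>B \<in> \<pi>. \<forall>B' \<in> \<pi>. B \<noteq> B' \<longrightarrow> nearly_disjoint B B')"

definition noncrossing :: "nat set set \<Rightarrow> bool" where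
  "noncrossing \<pi> \<longleftrightarrow>
     \<not> (\<exists>B \<in> \<pi>. \<exists>B' \<in> \<pi>. B \<noteq> B' \<and>
          (\<exists>a \<in> B. \<exists>c \<in> B. \<exists>b \<in> B'. \<exists>d \<in> B'. a < b \<and> b < c \<and> c < d))"

definition noncrossing_linked_partition :: "nat \<Rightarrow> nat set set \<Rightarrow> bool" where
  "noncrossing_linked_partition n \<pi> \<longleftrightarrow> linked_partition n \<pi> \<and> noncrossing \<pi>"

definition singly_covered :: "nat set set \<Rightarrow> nat \<Rightarrow> bool" where
  "singly_covered \<pi> i \<longleftrightarrow> card {B \<in> \<pi>. i \<in> B} = 1"

definition minimal_element :: "nat set set \<Rightarrow> nat \<Rightarrow> bool" where
  "minimal_element \<pi> i \<longleftrightarrow> (\<exists>B \<in> \<pi>. i = Min B)"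

definition singly_covered_minimal :: "nat set set \<Rightarrow> nat \<Rightarrow> bool" where
  "singly_covered_minimal \<pi> i \<longleftrightarrow> minimal_element \<pi> i \<and> singly_covered \<pi> i"

datatype step = N | E | D

fun dx :: "step \<Rightarrow> nat" where
  "dx N = 0" | "dx E = 1" | "dx D = 1"

fun dy :: "step \<Rightarrow> nat" where
  "dy N = 1" | "dy E = 0" | "dy D = 1"

definition xcoord :: "step list \<Rightarrow> nat" where
  "xcoord p = sum_list (map dx p)"

definition ycoord :: "step list \<Rightarrow> nat" where
  "ycoord p = sum_list (map dy p)"

definition schroeder_path :: "nat \<Rightarrow> step list \<Rightarrow> bool" where
  "schroeder_path n p \<longleftrightarrow>
     xcoord p = n \<and> ycoord p = n \<and>
     (\<forall>k \<le> length p. xcoord (take k p) \<le> ycoord (take k p))"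

definition phi_step1 :: "nat set set \<Rightarrow> nat \<Rightarrow> step list" where
  "phi_step1 \<pi> i =
     (if \<exists>B \<in> \<pi>. Min B = i + 1
      then replicate (card (THE B. B \<in> \<pi> \<and> Min B = i + 1) - 1) N
      else [])"

definition phi_step2 :: "nat set set \<Rightarrow> nat \<Rightarrow> step list" where
  "phi_step2 \<pi> i = (if singly_covered_minimal \<pi> (i + 2) then [D] else [E])"

definition phi :: "nat \<Rightarrow> nat set set \<Rightarrow> step list" where
  "phi n \<pi> = concat (map (\<lambda>i. phi_step1 \<pi> i @ phi_step2 \<pi> i) [0..<n])"

end

theory Submission
  imports Defs
begin


definition blk :: "(nat \<Rightarrow> nat) \<Rightarrow> (nat \<Rightarrow> bool) \<Rightarrow> nat \<Rightarrow> step list" where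
  "blk c s i = replicate (c (i+1)) N @ [if s (i+2) then D else E]"

definition enc :: "(nat \<Rightarrow> nat) \<Rightarrow> (nat \<Rightarrow> bool) \<Rightarrow> nat \<Rightarrow> step list" where
  "enc c s n = concat (map (blk c s) [0..<n])"

lemma enc_0[simp]: "enc c s 0 = []" by (simp add: enc_def)
lemma enc_Suc: "enc c s (Suc n) = enc c s n @ blk c s n" by (simp add: enc_def)

lemma xcoord_append[simp]: "xcoord (p @ q) = xcoord p + xcoord q" by (simp add: xcoord_def)
lemma ycoord_append[simp]: "ycoord (p @ q) = ycoord p + ycoord q" by (simp add: ycoord_def)
lemma xcoord_rep[simp]: "xcoord (replicate k N) = 0" by (induct k) (auto simp: xcoord_def)
lemma ycoord_rep[simp]: "ycoord (replicate k N) = k" by (induct k) (auto simp: ycoord_def)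
lemma xcoord_single[simp]: "xcoord [a] = dx a" by (simp add: xcoord_def)
lemma ycoord_single[simp]: "ycoord [a] = dy a" by (simp add: ycoord_def)
lemma xcoord_Nil[simp]: "xcoord [] = 0" by (simp add: xcoord_def)
lemma ycoord_Nil[simp]: "ycoord [] = 0" by (simp add: ycoord_def)

lemma x_blk[simp]: "xcoord (blk c s i) = 1" by (simp add: blk_def)
lemma y_blk[simp]: "ycoord (blk c s i) = c (i+1) + (if s (i+2) then 1 else 0)" by (simp add: blk_def)

lemma x_enc[simp]: "xcoord (enc c s n) = n" by (induct n) (auto simp: enc_Suc)
lemma y_enc: "ycoord (enc c s n) = (\<Sum>i<n. c (i+1) + (if s (i+2) then 1 else 0))"
  by (induct n) (auto simp: enc_Suc)

definition okp :: "step list \<Rightarrow> bool" where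
  "okp p \<longleftrightarrow> (\<forall>k \<le> length p. xcoord (take k p) \<le> ycoord (take k p))"

lemma okp_append: "okp (p @ q) \<longleftrightarrow> okp p \<and>
   (\<forall>k \<le> length q. xcoord p + xcoord (take k q) \<le> ycoord p + ycoord (take k q))"
proof
  assume h: "okp (p @ q)"
  have "okp p" unfolding okp_def
  proof (intro allI impI)
    fix k assume "k \<le> length p"
    then show "xcoord (take k p) \<le> ycoord (take k p)" using h[unfolded okp_def, rule_format, of k] by simp
  qed
  moreover have "\<forall>k \<le> length q. xcoord p + xcoord (take k q) \<le> ycoord p + ycoord (take k q)"
  proof (intro allI impI)
    fix k assume "k \<le> length q"
    then show "xcoord p + xcoord (take k q) \<le> ycoord p + ycoord (take k q)"
      using h[unfolded okp_def, rule_format, of "length p + k"] by simp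
  qed
  ultimately show "okp p \<and> (\<forall>k \<le> length q. xcoord p + xcoord (take k q) \<le> ycoord p + ycoord (take k q))" by blast
next
  assume h: "okp p \<and> (\<forall>k \<le> length q. xcoord p + xcoord (take k q) \<le> ycoord p + ycoord (take k q))"
  show "okp (p @ q)" unfolding okp_def
  proof (intro allI impI)
    fix k assume k: "k \<le> length (p @ q)"
    show "xcoord (take k (p @ q)) \<le> ycoord (take k (p @ q))"
    proof (cases "k \<le> length p")
      case True then show ?thesis using h[unfolded okp_def] by simp
    next
      case False
      define j where "j = k - length p"
      have "k = length p + j" "j \<le> length q" using k False by (simp_all add: j_def)
      then show ?thesis using h by simp
    qed
  qed
qed

lemma take_blk: "k \<le> length (blk c s i) \<Longrightarrow>
   take k (blk c s i) = (if k \<le> c (i+1) then replicate k N else blk c s i)"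
  by (auto simp: blk_def take_append min_def)

lemma okp_blk: "okp (p @ blk c s i) \<longleftrightarrow> okp p \<and> xcoord p + 1 \<le> ycoord p + ycoord (blk c s i)"
proof -
  have A: "xcoord p \<le> ycoord p" if "okp p"
    using that[unfolded okp_def, rule_format, of "length p"] by simp
  have "(\<forall>k \<le> length (blk c s i). xcoord p + xcoord (take k (blk c s i)) \<le> ycoord p + ycoord (take k (blk c s i)))
     \<longleftrightarrow> xcoord p \<le> ycoord p \<and> xcoord p + 1 \<le> ycoord p + ycoord (blk c s i)"
  proof
    assume h: "\<forall>k \<le> length (blk c s i). xcoord p + xcoord (take k (blk c s i)) \<le> ycoord p + ycoord (take k (blk c s i))"
    have "xcoord p \<le> ycoord p" using h[rule_format, of 0] by simp
    moreover have "xcoord p + 1 \<le> ycoord p + ycoord (blk c s i)" using h[rule_format, of "length (blk c s i)"] by simp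
    ultimately show "xcoord p \<le> ycoord p \<and> xcoord p + 1 \<le> ycoord p + ycoord (blk c s i)" by blast
  next
    assume h: "xcoord p \<le> ycoord p \<and> xcoord p + 1 \<le> ycoord p + ycoord (blk c s i)"
    show "\<forall>k \<le> length (blk c s i). xcoord p + xcoord (take k (blk c s i)) \<le> ycoord p + ycoord (take k (blk c s i))"
      using h by (auto simp: take_blk simp del: y_blk)
  qed
  then show ?thesis using okp_append A by blast
qed

lemma okp_enc: "okp (enc c s n) \<longleftrightarrow> (\<forall>m<n. m + 1 \<le> ycoord (enc c s (Suc m)))"
proof (induct n)
  case 0 then show ?case by (simp add: okp_def)
next
  case (Suc n)
  show ?case unfolding enc_Suc okp_blk Suc using less_Suc_eq by (auto simp: enc_Suc)
qed

lemma schroeder_enc: "schroeder_path n (enc c s n) \<longleftrightarrow>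
   ycoord (enc c s n) = n \<and> (\<forall>m<n. m + 1 \<le> ycoord (enc c s (Suc m)))"
  using okp_enc[of c s n] unfolding schroeder_path_def okp_def by simp

lemma rep_block_eq:
  assumes "x \<noteq> N" "x' \<noteq> N" "replicate k N @ [x] @ r = replicate k' N @ [x'] @ r'"
  shows "k = k' \<and> x = x' \<and> r = r'"
  using assms
proof (induct k arbitrary: k')
  case 0 then show ?case by (cases k') auto
next
  case (Suc k) then show ?case by (cases k') auto
qed

lemma concat_blk_eq:
  "concat (map (blk c s) xs) = concat (map (blk c' s') xs) \<Longrightarrow> \<forall>i \<in> set xs. blk c s i = blk c' s' i"
proof (induct xs)
  case Nil then show ?case by simp
next
  case (Cons a xs)
  have e: "blk c s a @ concat (map (blk c s) xs) = blk c' s' a @ concat (map (blk c' s') xs)"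
    using Cons.prems by simp
  have e2: "replicate (c (a+1)) N @ [if s (a+2) then D else E] @ concat (map (blk c s) xs) =
        replicate (c' (a+1)) N @ [if s' (a+2) then D else E] @ concat (map (blk c' s') xs)"
    using e unfolding blk_def[of c s a] blk_def[of c' s' a] by simp
  have x1: "(if s (a+2) then D else E) \<noteq> N" by simp
  have x2: "(if s' (a+2) then D else E) \<noteq> N" by simp
  have r: "c (a+1) = c' (a+1) \<and> (if s (a+2) then D else E) = (if s' (a+2) then D else E) \<and>
        concat (map (blk c s) xs) = concat (map (blk c' s') xs)"
    by (rule rep_block_eq[OF x1 x2 e2])
  then have "blk c s a = blk c' s' a" unfolding blk_def[of c s a] blk_def[of c' s' a] by simp
  moreover have "\<forall>i \<in> set xs. blk c s i = blk c' s' i" using Cons.hyps r by blast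
  ultimately show ?case by simp
qed

lemma enc_inj:
  assumes "enc c s n = enc c' s' n" "i < n"
  shows "c (i+1) = c' (i+1) \<and> s (i+2) = s' (i+2)"
proof -
  have "blk c s i = blk c' s' i" using concat_blk_eq[of c s "[0..<n]" c' s'] assms by (simp add: enc_def)
  then have "c (i+1) = c' (i+1)" "(if s (i+2) then D else E) = (if s' (i+2) then D else E)"
    by (auto simp: blk_def)
  then show ?thesis by (auto split: if_splits)
qed

lemma trailing_N: "\<exists>q' t. q = q' @ replicate t N \<and> (q' = [] \<or> last q' \<noteq> N)"
proof (induct q rule: rev_induct)
  case Nil then show ?case by simp
next
  case (snoc a q)
  then obtain q' t where h: "q = q' @ replicate t N" "q' = [] \<or> last q' \<noteq> N" by blast
  show ?case
  proof (cases "a = N")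
    case True
    then have "q @ [a] = q' @ replicate (Suc t) N" using h by (simp add: replicate_append_same)
    then show ?thesis using h by blast
  next
    case False
    then show ?thesis by (intro exI[of _ "q @ [a]"] exI[of _ 0]) simp
  qed
qed

lemma enc_cong: "(\<And>i. i < n \<Longrightarrow> c (i+1) = c' (i+1) \<and> s (i+2) = s' (i+2)) \<Longrightarrow> enc c s n = enc c' s' n"
  unfolding enc_def blk_def by (intro arg_cong[where f=concat] map_cong) auto

lemma decompose: "(p = [] \<or> last p \<noteq> N) \<Longrightarrow> \<exists>c s. p = enc c s (xcoord p)"
proof (induct "length p" arbitrary: p rule: less_induct)
  case less
  show ?case
  proof (cases "p = []")
    case True then show ?thesis by (auto intro: exI[of _ "\<lambda>_. 0"])
  next
    case False
    then have x: "last p \<noteq> N" using less.prems by simp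
    obtain q' t where q: "butlast p = q' @ replicate t N" "q' = [] \<or> last q' \<noteq> N" using trailing_N by blast
    have "p = butlast p @ [last p]" using False by simp
    then have p: "p = q' @ replicate t N @ [last p]" using q by simp
    have "length q' < length p" by (subst p) simp
    then obtain c s where cs: "q' = enc c s (xcoord q')" using less q(2) by blast
    define m where "m = xcoord q'"
    define c' where "c' = c(Suc m := t)"
    define s' where "s' = s(Suc (Suc m) := (last p = D))"
    have "enc c' s' m = enc c s m" by (rule enc_cong) (auto simp: c'_def s'_def)
    moreover have "blk c' s' m = replicate t N @ [last p]" using x
      by (cases "last p") (auto simp: blk_def c'_def s'_def)
    moreover have "xcoord p = Suc m" using p x by (cases "last p") (auto simp: m_def)
    ultimately have "p = enc c' s' (xcoord p)" using p cs m_def by (simp add: enc_Suc)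
    then show ?thesis by blast
  qed
qed

lemma schroeder_last: "schroeder_path n p \<Longrightarrow> p = [] \<or> last p \<noteq> N"
proof (rule ccontr)
  assume h: "schroeder_path n p" "\<not> (p = [] \<or> last p \<noteq> N)"
  then have p: "p = butlast p @ [N]" using append_butlast_last_id[of p] by simp
  have k: "take (length (butlast p)) p = butlast p" by (simp add: butlast_conv_take)
  have all: "\<forall>k\<le>length p. xcoord (take k p) \<le> ycoord (take k p)" using h(1) unfolding schroeder_path_def by blast
  have "length (butlast p) \<le> length p" by simp
  then have "xcoord (take (length (butlast p)) p) \<le> ycoord (take (length (butlast p)) p)" using all by blast
  then have "xcoord (butlast p) \<le> ycoord (butlast p)" by (simp only: k)
  moreover have "xcoord p = n" "ycoord p = n" using h(1) unfolding schroeder_path_def by simp_all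
  then have "xcoord (butlast p @ [N]) = n" "ycoord (butlast p @ [N]) = n" by (simp_all add: p[symmetric])
  ultimately show False by simp
qed

lemma schroeder_enc_ex: "schroeder_path n p \<Longrightarrow> \<exists>c s. p = enc c s n"
  using decompose[OF schroeder_last] unfolding schroeder_path_def by auto



definition cnt :: "nat set set \<Rightarrow> nat \<Rightarrow> nat" where
  "cnt \<pi> j = (if \<exists>B \<in> \<pi>. Min B = j then card (THE B. B \<in> \<pi> \<and> Min B = j) - 1 else 0)"

lemma phi_enc: "phi n \<pi> = enc (cnt \<pi>) (singly_covered_minimal \<pi>) n"
  unfolding phi_def enc_def blk_def phi_step1_def phi_step2_def cnt_def
  by (intro arg_cong[where f=concat] map_cong) auto

definition chd :: "nat set set \<Rightarrow> nat \<Rightarrow> nat \<Rightarrow> bool" where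
  "chd \<pi> a x \<longleftrightarrow> (\<exists>B \<in> \<pi>. Min B = a \<and> x \<in> B \<and> x \<noteq> a)"

lemma lp_block:
  assumes "linked_partition m \<pi>" "B \<in> \<pi>"
  shows "finite B \<and> B \<noteq> {} \<and> B \<subseteq> {1..m}"
proof -
  have "B \<noteq> {} \<and> B \<subseteq> {1..m}" using assms unfolding linked_partition_def by blast
  then show ?thesis using finite_subset by blast
qed

lemma lp_min:
  assumes "linked_partition m \<pi>" "B \<in> \<pi>"
  shows "Min B \<in> B \<and> (\<forall>x\<in>B. Min B \<le> x)"
  using lp_block[OF assms] by auto

lemma lp_finite: "linked_partition m \<pi> \<Longrightarrow> finite \<pi>"
proof -
  assume "linked_partition m \<pi>"
  then have "\<pi> \<subseteq> Pow {1..m}" unfolding linked_partition_def by blast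
  then show ?thesis by (meson finite_Pow_iff finite_atLeastAtMost finite_subset)
qed

lemma lp_nd: "linked_partition m \<pi> \<Longrightarrow> B \<in> \<pi> \<Longrightarrow> B' \<in> \<pi> \<Longrightarrow> B \<noteq> B' \<Longrightarrow> i \<in> B \<Longrightarrow> i \<in> B' \<Longrightarrow>
   (i = Min B \<and> card B > 1 \<and> i \<noteq> Min B') \<or> (i = Min B' \<and> card B' > 1 \<and> i \<noteq> Min B)"
  unfolding linked_partition_def nearly_disjoint_def by blast

lemma lp_min_inj:
  assumes lp: "linked_partition m \<pi>" and B: "B \<in> \<pi>" "B' \<in> \<pi>" "Min B = Min B'"
  shows "B = B'"
proof (rule ccontr)
  assume ne: "B \<noteq> B'"
  have "Min B \<in> B" using lp_block[OF lp B(1)] by auto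
  moreover have "Min B \<in> B'" using lp_block[OF lp B(2)] B(3) by auto
  ultimately show False using lp_nd[OF lp B(1,2) ne] B(3) by auto
qed

lemma chd_unique:
  assumes lp: "linked_partition m \<pi>" and "chd \<pi> a x" "chd \<pi> b x"
  shows "a = b"
proof -
  obtain B where B: "B \<in> \<pi>" "Min B = a" "x \<in> B" "x \<noteq> a" using assms(2) unfolding chd_def by blast
  obtain B' where B': "B' \<in> \<pi>" "Min B' = b" "x \<in> B'" "x \<noteq> b" using assms(3) unfolding chd_def by blast
  have "B = B'"
  proof (rule ccontr)
    assume "B \<noteq> B'"
    then show False using lp_nd[OF lp B(1) B'(1)] B B' by auto
  qed
  then show ?thesis using B B' by simp
qed

lemma chd_range:
  assumes lp: "linked_partition m \<pi>" and "chd \<pi> a x"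
  shows "a < x \<and> x \<le> m \<and> 1 \<le> a"
proof -
  obtain B where B: "B \<in> \<pi>" "Min B = a" "x \<in> B" "x \<noteq> a" using assms(2) unfolding chd_def by blast
  have f: "finite B \<and> B \<noteq> {} \<and> B \<subseteq> {1..m}" using lp_block[OF lp B(1)] .
  have "a \<le> x" using B lp_min[OF lp B(1)] by auto
  moreover have "a \<in> B" using lp_min[OF lp B(1)] B by auto
  moreover have "x \<in> {1..m}" "a \<in> {1..m}" using f B \<open>a \<in> B\<close> by blast+
  ultimately show ?thesis using B(4) by auto
qed

lemma chd_finite: "linked_partition m \<pi> \<Longrightarrow> finite {x. chd \<pi> a x}"
  by (rule finite_subset[of _ "{1..m}"]) (auto dest: chd_range)

lemma scm_iff:
  assumes lp: "linked_partition m \<pi>"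
  shows "singly_covered_minimal \<pi> x \<longleftrightarrow> x \<in> {1..m} \<and> \<not> (\<exists>a. chd \<pi> a x)"
proof
  assume h: "singly_covered_minimal \<pi> x"
  then obtain B0 where B0: "B0 \<in> \<pi>" "x = Min B0"
    unfolding singly_covered_minimal_def minimal_element_def by blast
  have f: "finite B0 \<and> B0 \<noteq> {} \<and> B0 \<subseteq> {1..m}" using lp_block[OF lp B0(1)] .
  have xB0: "x \<in> B0" using f B0 by auto
  have c1: "card {B \<in> \<pi>. x \<in> B} = 1" using h unfolding singly_covered_minimal_def singly_covered_def by blast
  have "\<not> (\<exists>a. chd \<pi> a x)"
  proof
    assume "\<exists>a. chd \<pi> a x"
    then obtain B where B: "B \<in> \<pi>" "x \<in> B" "x \<noteq> Min B" unfolding chd_def by blast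
    have ne: "B \<noteq> B0" using B B0 by auto
    obtain z where z: "{B \<in> \<pi>. x \<in> B} = {z}" using c1 by (rule card_1_singletonE)
    have "B \<in> {B \<in> \<pi>. x \<in> B}" "B0 \<in> {B \<in> \<pi>. x \<in> B}" using B B0 xB0 by auto
    then have "B = z" "B0 = z" unfolding z by auto
    then show False using ne by simp
  qed
  then show "x \<in> {1..m} \<and> \<not> (\<exists>a. chd \<pi> a x)" using f xB0 by blast
next
  assume h: "x \<in> {1..m} \<and> \<not> (\<exists>a. chd \<pi> a x)"
  then obtain B where B: "B \<in> \<pi>" "x \<in> B" using lp unfolding linked_partition_def by blast
  have xm: "x = Min B" using h B unfolding chd_def by blast
  have "{B' \<in> \<pi>. x \<in> B'} = {B}"
  proof (intro set_eqI iffI)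
    fix B' assume B': "B' \<in> {B' \<in> \<pi>. x \<in> B'}"
    show "B' \<in> {B}"
    proof (rule ccontr)
      assume "B' \<notin> {B}"
      then have "B \<noteq> B'" by auto
      then have "x \<noteq> Min B'" using lp_nd[OF lp B(1) _ _ B(2), of B'] B' xm by auto
      then have "chd \<pi> (Min B') x" using B' unfolding chd_def by auto
      then show False using h by blast
    qed
  qed (use B in auto)
  then show "singly_covered_minimal \<pi> x"
    unfolding singly_covered_minimal_def singly_covered_def minimal_element_def using B xm by auto
qed

lemma cnt_card:
  assumes lp: "linked_partition m \<pi>"
  shows "cnt \<pi> a = card {x. chd \<pi> a x}"
proof (cases "\<exists>B \<in> \<pi>. Min B = a")
  case True
  then obtain B where B: "B \<in> \<pi>" "Min B = a" by blast
  have the: "(THE B. B \<in> \<pi> \<and> Min B = a) = B"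
    using B lp_min_inj[OF lp] by (intro the_equality) auto
  have "{x. chd \<pi> a x} = B - {a}"
    using B lp_min_inj[OF lp] unfolding chd_def by auto
  moreover have "a \<in> B" using lp_min[OF lp B(1)] B by auto
  ultimately show ?thesis unfolding cnt_def using True the by (simp add: card_Diff_singleton)
next
  case False
  then have "{x. chd \<pi> a x} = {}" unfolding chd_def by auto
  then show ?thesis unfolding cnt_def using False by simp
qed

lemma chd_noncross:
  assumes lp: "linked_partition m \<pi>" and nc: "noncrossing \<pi>"
    and h: "chd \<pi> a x" "chd \<pi> b d" "a < b" "b < x" "x < d"
  shows False
proof -
  obtain B where B: "B \<in> \<pi>" "Min B = a" "x \<in> B" using h(1) unfolding chd_def by blast
  obtain B' where B': "B' \<in> \<pi>" "Min B' = b" "d \<in> B'" using h(2) unfolding chd_def by blast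
  have aB: "a \<in> B" using lp_min[OF lp B(1)] B by auto
  have bB: "b \<in> B'" using lp_min[OF lp B'(1)] B' by auto
  have ne: "B \<noteq> B'" using B B' h by auto
  have w: "\<exists>a'\<in>B. \<exists>c\<in>B. \<exists>b'\<in>B'. \<exists>d'\<in>B'. a' < b' \<and> b' < c \<and> c < d'"
    by (rule bexI[where x=a], rule bexI[where x=x], rule bexI[where x=b], rule bexI[where x=d])
       (use B(3) B'(3) h(3-5) aB bB in auto)
  have "\<exists>B\<in>\<pi>. \<exists>B'\<in>\<pi>. B \<noteq> B' \<and> (\<exists>a'\<in>B. \<exists>c\<in>B. \<exists>b'\<in>B'. \<exists>d'\<in>B'. a' < b' \<and> b' < c \<and> c < d')"
    by (rule bexI[where x=B], rule bexI[where x=B']) (use ne w B(1) B'(1) in auto)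
  then show False using nc unfolding noncrossing_def by blast
qed

lemma blk_repr:
  assumes lp: "linked_partition m \<pi>" and B: "B \<in> \<pi>"
  shows "B = insert (Min B) {x. chd \<pi> (Min B) x}"
  using B lp_min[OF lp B] lp_min_inj[OF lp] unfolding chd_def by auto

lemma min_iff:
  assumes lp: "linked_partition m \<pi>"
  shows "(\<exists>B \<in> \<pi>. Min B = a) \<longleftrightarrow> singly_covered_minimal \<pi> a \<or> cnt \<pi> a > 0"
proof
  assume "\<exists>B \<in> \<pi>. Min B = a"
  then obtain B where B: "B \<in> \<pi>" "Min B = a" by blast
  show "singly_covered_minimal \<pi> a \<or> cnt \<pi> a > 0"
  proof (cases "cnt \<pi> a > 0")
    case False
    then have e: "{x. chd \<pi> a x} = {}" using cnt_card[OF lp] chd_finite[OF lp] by (metis card_0_eq neq0_conv)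
    then have Ba: "B = {a}" using blk_repr[OF lp B(1)] B by simp
    have "a \<in> {1..m}" using lp_block[OF lp B(1)] Ba by auto
    moreover have "\<not> (\<exists>b. chd \<pi> b a)"
    proof
      assume "\<exists>b. chd \<pi> b a"
      then obtain B' where B': "B' \<in> \<pi>" "a \<in> B'" "a \<noteq> Min B'" unfolding chd_def by blast
      then have "B \<noteq> B'" using B by auto
      then show False using lp_nd[OF lp B(1) B'(1)] B' Ba by auto
    qed
    ultimately show ?thesis using scm_iff[OF lp] by blast
  qed simp
next
  assume "singly_covered_minimal \<pi> a \<or> cnt \<pi> a > 0"
  then show "\<exists>B \<in> \<pi>. Min B = a"
    unfolding singly_covered_minimal_def minimal_element_def cnt_def by (auto split: if_splits)
qed

definition candset :: "nat set set \<Rightarrow> nat \<Rightarrow> nat set" where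
  "candset \<pi> x = {a. a < x \<and> card {y. y < x \<and> chd \<pi> a y} < cnt \<pi> a}"

lemma par_char:
  assumes lp: "linked_partition m \<pi>" and nc: "noncrossing \<pi>" and h: "chd \<pi> p x"
  shows "p = Max (candset \<pi> x)"
proof -
  have px: "p < x" using chd_range[OF lp h] by simp
  have fin: "finite (candset \<pi> x)" unfolding candset_def by (rule finite_subset[of _ "{..<x}"]) auto
  have sub: "{y. y < x \<and> chd \<pi> p y} \<subset> {y. chd \<pi> p y}" using h by auto
  have "card {y. y < x \<and> chd \<pi> p y} < card {y. chd \<pi> p y}"
    by (rule psubset_card_mono[OF chd_finite[OF lp] sub])
  then have pin: "p \<in> candset \<pi> x" unfolding candset_def using px cnt_card[OF lp] by simp
  have ge: "a \<le> p" if a: "a \<in> candset \<pi> x" for a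
  proof (rule ccontr)
    assume "\<not> a \<le> p"
    then have pa: "p < a" by simp
    have ax: "a < x" and lt: "card {y. y < x \<and> chd \<pi> a y} < card {y. chd \<pi> a y}"
      using a cnt_card[OF lp] unfolding candset_def by auto
    have "\<exists>d. chd \<pi> a d \<and> \<not> d < x"
    proof (rule ccontr)
      assume "\<not> (\<exists>d. chd \<pi> a d \<and> \<not> d < x)"
      then have "{y. y < x \<and> chd \<pi> a y} = {y. chd \<pi> a y}" by auto
      then show False using lt by simp
    qed
    then obtain d where d: "chd \<pi> a d" "\<not> d < x" by blast
    have "d \<noteq> x" using chd_unique[OF lp h] d pa by auto
    then have "x < d" using d by simp
    then show False using chd_noncross[OF lp nc h d(1) pa ax] by simp
  qed
  show ?thesis using pin ge fin by (intro Max_eqI[symmetric]) auto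
qed

lemma chd_iff:
  assumes lp: "linked_partition m \<pi>" and nc: "noncrossing \<pi>"
  shows "chd \<pi> a x \<longleftrightarrow> x \<in> {1..m} \<and> \<not> singly_covered_minimal \<pi> x \<and> a = Max (candset \<pi> x)"
proof
  assume h: "chd \<pi> a x"
  then show "x \<in> {1..m} \<and> \<not> singly_covered_minimal \<pi> x \<and> a = Max (candset \<pi> x)"
    using chd_range[OF lp h] scm_iff[OF lp] par_char[OF lp nc h] by auto
next
  assume h: "x \<in> {1..m} \<and> \<not> singly_covered_minimal \<pi> x \<and> a = Max (candset \<pi> x)"
  then obtain p where p: "chd \<pi> p x" using scm_iff[OF lp] by blast
  then show "chd \<pi> a x" using par_char[OF lp nc p] h by simp
qed

lemma chd_eq:
  assumes lp1: "linked_partition m \<pi>1" and nc1: "noncrossing \<pi>1"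
    and lp2: "linked_partition m \<pi>2" and nc2: "noncrossing \<pi>2"
    and cn: "\<And>j. cnt \<pi>1 j = cnt \<pi>2 j" and sc: "\<And>j. singly_covered_minimal \<pi>1 j = singly_covered_minimal \<pi>2 j"
  shows "chd \<pi>1 a x = chd \<pi>2 a x"
proof (induct x arbitrary: a rule: less_induct)
  case (less x)
  have "\<And>a. {y. y < x \<and> chd \<pi>1 a y} = {y. y < x \<and> chd \<pi>2 a y}" using less by blast
  then have "candset \<pi>1 x = candset \<pi>2 x" unfolding candset_def using cn by simp
  then show ?case using chd_iff[OF lp1 nc1] chd_iff[OF lp2 nc2] sc by simp
qed

lemma nclp_sub:
  assumes lp1: "linked_partition m \<pi>1" and nc1: "noncrossing \<pi>1"
    and lp2: "linked_partition m \<pi>2" and nc2: "noncrossing \<pi>2"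
    and cn: "\<And>j. cnt \<pi>1 j = cnt \<pi>2 j" and sc: "\<And>j. singly_covered_minimal \<pi>1 j = singly_covered_minimal \<pi>2 j"
  shows "\<pi>1 \<subseteq> \<pi>2"
proof
  fix B assume B: "B \<in> \<pi>1"
  define a where "a = Min B"
  have "\<exists>B \<in> \<pi>1. Min B = a" using B a_def by blast
  then have "\<exists>B \<in> \<pi>2. Min B = a" using min_iff[OF lp1] min_iff[OF lp2] cn sc by simp
  then obtain B2 where B2: "B2 \<in> \<pi>2" "Min B2 = a" by blast
  have "B = insert a {x. chd \<pi>1 a x}" using blk_repr[OF lp1 B] a_def by simp
  also have "\<dots> = insert a {x. chd \<pi>2 a x}" using chd_eq[OF lp1 nc1 lp2 nc2 cn sc] by simp
  also have "\<dots> = B2" using blk_repr[OF lp2 B2(1)] B2(2) by simp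
  finally show "B \<in> \<pi>2" using B2 by simp
qed

lemma cnt_out:
  assumes lp: "linked_partition m \<pi>" and "j = 0 \<or> j \<ge> m"
  shows "cnt \<pi> j = 0"
proof -
  have "{x. chd \<pi> j x} = {}" using chd_range[OF lp] assms(2) by fastforce
  then show ?thesis using cnt_card[OF lp] by simp
qed

lemma scm_1:
  assumes lp: "linked_partition m \<pi>" and "m \<ge> 1"
  shows "singly_covered_minimal \<pi> 1"
proof -
  have "\<not> chd \<pi> a 1" for a using chd_range[OF lp, of a 1] by auto
  then show ?thesis using scm_iff[OF lp] assms(2) by auto
qed

lemma scm_big:
  assumes lp: "linked_partition m \<pi>" and "j = 0 \<or> j > m"
  shows "\<not> singly_covered_minimal \<pi> j"
  using scm_iff[OF lp] assms(2) by auto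

lemma phi_inj:
  assumes lp1: "linked_partition (n+1) \<pi>1" and nc1: "noncrossing \<pi>1"
    and lp2: "linked_partition (n+1) \<pi>2" and nc2: "noncrossing \<pi>2"
    and e: "phi n \<pi>1 = phi n \<pi>2"
  shows "\<pi>1 = \<pi>2"
proof -
  have e': "enc (cnt \<pi>1) (singly_covered_minimal \<pi>1) n = enc (cnt \<pi>2) (singly_covered_minimal \<pi>2) n"
    using e by (simp add: phi_enc)
  have cn: "cnt \<pi>1 j = cnt \<pi>2 j" for j
  proof (cases "j = 0 \<or> j \<ge> n + 1")
    case True then show ?thesis using cnt_out[OF lp1] cnt_out[OF lp2] by simp
  next
    case False
    then have j: "j - 1 < n" "j - 1 + 1 = j" by auto
    have "cnt \<pi>1 (j - 1 + 1) = cnt \<pi>2 (j - 1 + 1)" using enc_inj[OF e' j(1)] by blast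
    then show ?thesis unfolding j(2) .
  qed
  have sc: "singly_covered_minimal \<pi>1 j = singly_covered_minimal \<pi>2 j" for j
  proof (cases "j = 0 \<or> j = 1 \<or> j > n + 1")
    case True then show ?thesis using scm_1[OF lp1] scm_1[OF lp2] scm_big[OF lp1, of j] scm_big[OF lp2, of j] by auto
  next
    case False
    then have j: "j - 2 < n" "j - 2 + 2 = j" by auto
    have "singly_covered_minimal \<pi>1 (j - 2 + 2) = singly_covered_minimal \<pi>2 (j - 2 + 2)"
      using enc_inj[OF e' j(1)] by blast
    then show ?thesis unfolding j(2) .
  qed
  show ?thesis
    using nclp_sub[OF lp1 nc1 lp2 nc2 cn sc] nclp_sub[OF lp2 nc2 lp1 nc1 cn[symmetric] sc[symmetric]] by blast
qed



lemma sum_if_card: "(\<Sum>i<(k::nat). (if P i then 1 else 0)::nat) = card {i. i < k \<and> P i}"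
proof (induct k)
  case 0 then show ?case by simp
next
  case (Suc k)
  have "{i. i < Suc k \<and> P i} = (if P k then insert k {i. i < k \<and> P i} else {i. i < k \<and> P i})"
    by (auto simp: less_Suc_eq)
  then show ?case using Suc by simp
qed

lemma card_split: "card {i. i < (k::nat) \<and> P i} + card {i. i < k \<and> \<not> P i} = k"
proof -
  have "{i. i < k \<and> P i} \<union> {i. i < k \<and> \<not> P i} = {..<k}" by auto
  moreover have "{i. i < k \<and> P i} \<inter> {i. i < k \<and> \<not> P i} = {}" by auto
  ultimately show ?thesis using card_Un_disjoint[of "{i. i < k \<and> P i}" "{i. i < k \<and> \<not> P i}"] by simp
qed

lemma y_enc2: "ycoord (enc c s k) = (\<Sum>i<k. c (i+1)) + card {i. i < k \<and> s (i+2)}"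
  unfolding y_enc sum.distrib sum_if_card by simp

lemma sum_cnt:
  assumes lp: "linked_partition m \<pi>"
  shows "(\<Sum>i<k. cnt \<pi> (i+1)) = card (\<Union>i<k. {x. chd \<pi> (i+1) x})"
proof -
  have "card (\<Union>i<k. {x. chd \<pi> (i+1) x}) = (\<Sum>i<k. card {x. chd \<pi> (i+1) x})"
  proof (rule card_UN_disjoint)
    show "\<forall>i\<in>{..<k}. finite {x. chd \<pi> (i + 1) x}" using chd_finite[OF lp] by blast
    show "\<forall>i\<in>{..<k}. \<forall>j\<in>{..<k}. i \<noteq> j \<longrightarrow> {x. chd \<pi> (i + 1) x} \<inter> {x. chd \<pi> (j + 1) x} = {}"
      using chd_unique[OF lp] by fastforce
  qed simp
  then show ?thesis using cnt_card[OF lp] by simp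
qed

lemma fwd_ge:
  assumes lp: "linked_partition (n+1) \<pi>" and k: "k \<le> n"
  shows "card {i. i < k \<and> \<not> singly_covered_minimal \<pi> (i+2)} \<le> card (\<Union>i<k. {x. chd \<pi> (i+1) x})"
proof (rule card_inj_on_le[where f="\<lambda>i. i + 2"])
  show "finite (\<Union>i<k. {x. chd \<pi> (i+1) x})" using chd_finite[OF lp] by blast
  show "inj_on (\<lambda>i. i + 2) {i. i < k \<and> \<not> singly_covered_minimal \<pi> (i+2)}" by (auto simp: inj_on_def)
  show "(\<lambda>i. i + 2) ` {i. i < k \<and> \<not> singly_covered_minimal \<pi> (i+2)} \<subseteq> (\<Union>i<k. {x. chd \<pi> (i+1) x})"
  proof
    fix y assume "y \<in> (\<lambda>i. i + 2) ` {i. i < k \<and> \<not> singly_covered_minimal \<pi> (i+2)}"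
    then obtain i where i: "y = i + 2" "i < k" "\<not> singly_covered_minimal \<pi> (i+2)" by blast
    have "i + 2 \<in> {1..n+1}" using i k by auto
    then obtain a where a: "chd \<pi> a (i+2)" using scm_iff[OF lp] i(3) by blast
    have "a < i + 2" "1 \<le> a" using chd_range[OF lp a] by auto
    then have "a - 1 < k" "a - 1 + 1 = a" using i by auto
    then show "y \<in> (\<Union>i<k. {x. chd \<pi> (i+1) x})" using a i(1) by (metis (mono_tags, lifting) UN_I lessThan_iff mem_Collect_eq)
  qed
qed

lemma fwd_le:
  assumes lp: "linked_partition (n+1) \<pi>"
  shows "card (\<Union>i<n. {x. chd \<pi> (i+1) x}) \<le> card {i. i < n \<and> \<not> singly_covered_minimal \<pi> (i+2)}"
proof -
  have "(\<Union>i<n. {x. chd \<pi> (i+1) x}) \<subseteq> (\<lambda>i. i + 2) ` {i. i < n \<and> \<not> singly_covered_minimal \<pi> (i+2)}"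
  proof
    fix x assume "x \<in> (\<Union>i<n. {x. chd \<pi> (i+1) x})"
    then obtain i where i: "i < n" "chd \<pi> (i+1) x" by blast
    have r: "i + 1 < x" "x \<le> n + 1" using chd_range[OF lp i(2)] by auto
    have ns: "\<not> singly_covered_minimal \<pi> x" using scm_iff[OF lp] i(2) by blast
    have "x - 2 < n" "x - 2 + 2 = x" using r by auto
    then show "x \<in> (\<lambda>i. i + 2) ` {i. i < n \<and> \<not> singly_covered_minimal \<pi> (i+2)}"
      using ns by (metis (mono_tags, lifting) image_eqI mem_Collect_eq)
  qed
  moreover have fin: "finite {i. i < n \<and> \<not> singly_covered_minimal \<pi> (i+2)}" by simp
  ultimately have "card (\<Union>i<n. {x. chd \<pi> (i+1) x}) \<le> card ((\<lambda>i. i + 2) ` {i. i < n \<and> \<not> singly_covered_minimal \<pi> (i+2)})"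
    by (intro card_mono finite_imageI)
  also have "\<dots> \<le> card {i. i < n \<and> \<not> singly_covered_minimal \<pi> (i+2)}" by (rule card_image_le[OF fin])
  finally show ?thesis .
qed

lemma phi_schroeder:
  assumes lp: "linked_partition (n+1) \<pi>"
  shows "schroeder_path n (phi n \<pi>)"
proof -
  let ?s = "singly_covered_minimal \<pi>"
  have Y: "ycoord (enc (cnt \<pi>) ?s k) = card (\<Union>i<k. {x. chd \<pi> (i+1) x}) + card {i. i < k \<and> ?s (i+2)}" for k
    unfolding y_enc2 sum_cnt[OF lp] ..
  have ge: "k \<le> ycoord (enc (cnt \<pi>) ?s k)" if "k \<le> n" for k
    using fwd_ge[OF lp that] card_split[of k "\<lambda>i. ?s (i+2)"] Y[of k] by linarith
  have "ycoord (enc (cnt \<pi>) ?s n) = n"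
    using ge[of n] fwd_le[OF lp] card_split[of n "\<lambda>i. ?s (i+2)"] Y[of n] by linarith
  moreover have "\<forall>m<n. m + 1 \<le> ycoord (enc (cnt \<pi>) ?s (Suc m))" using ge by simp
  ultimately show ?thesis unfolding phi_enc schroeder_enc by blast
qed



function par :: "(nat \<Rightarrow> nat) \<Rightarrow> (nat \<Rightarrow> bool) \<Rightarrow> nat \<Rightarrow> nat" where
  "par c q x = (if q x then Max (set (filter (\<lambda>a. length (filter (\<lambda>y. par c q y = a) [1..<x]) < c a) [1..<x])) else 0)"
  by auto
termination by (relation "measure (\<lambda>(c, q, x). x)") auto

declare par.simps[simp del]

definition cnd :: "(nat \<Rightarrow> nat) \<Rightarrow> (nat \<Rightarrow> bool) \<Rightarrow> nat \<Rightarrow> nat set" where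
  "cnd c q x = {a \<in> {1..<x}. card {y \<in> {1..<x}. par c q y = a} < c a}"

lemma par_eq: "par c q x = (if q x then Max (cnd c q x) else 0)"
proof -
  have "length (filter (\<lambda>y. par c q y = a) [1..<x]) = card {y \<in> {1..<x}. par c q y = a}" for a
    by (subst distinct_length_filter) (auto intro: arg_cong[where f=card])
  then have "set (filter (\<lambda>a. length (filter (\<lambda>y. par c q y = a) [1..<x]) < c a) [1..<x]) = cnd c q x"
    unfolding cnd_def by auto
  then show ?thesis by (subst par.simps) simp
qed

locale cons =
  fixes m :: nat and c :: "nat \<Rightarrow> nat" and q :: "nat \<Rightarrow> bool"
  assumes A0: "q x \<Longrightarrow> 2 \<le> x \<and> x \<le> m"
    and A1: "0 < c a \<Longrightarrow> 1 \<le> a \<and> a < m"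
    and A2: "q x \<Longrightarrow> card {y \<in> {2..x}. q y} \<le> (\<Sum>a\<in>{1..<x}. c a)"
    and A3: "(\<Sum>a\<in>{1..<m}. c a) = card {y. q y}"
begin

abbreviation "p \<equiv> par c q"

definition ch :: "nat \<Rightarrow> nat set" where "ch a = {y. q y \<and> p y = a}"

lemma C0: "p y \<noteq> 0 \<Longrightarrow> q y"
  using par_eq[of c q y] by (auto split: if_splits)

lemma fin_cnd: "finite (cnd c q x)" unfolding cnd_def by simp

lemma C1:
  assumes qx: "q x"
  shows "cnd c q x \<noteq> {}"
proof
  assume e: "cnd c q x = {}"
  then have le: "\<forall>a\<in>{1..<x}. c a \<le> card {y \<in> {1..<x}. p y = a}" unfolding cnd_def by auto
  have "(\<Sum>a\<in>{1..<x}. c a) \<le> (\<Sum>a\<in>{1..<x}. card {y \<in> {1..<x}. p y = a})"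
    using le by (intro sum_mono) auto
  also have "\<dots> = card (\<Union>a\<in>{1..<x}. {y \<in> {1..<x}. p y = a})"
    by (rule card_UN_disjoint[symmetric]) auto
  also have "\<dots> \<le> card {y \<in> {2..<x}. q y}"
  proof (rule card_mono)
    show "finite {y \<in> {2..<x}. q y}" by simp
    show "(\<Union>a\<in>{1..<x}. {y \<in> {1..<x}. p y = a}) \<subseteq> {y \<in> {2..<x}. q y}"
    proof
      fix y assume "y \<in> (\<Union>a\<in>{1..<x}. {y \<in> {1..<x}. p y = a})"
      then have y: "y < x" "p y \<noteq> 0" by auto
      then have "q y" using C0 by blast
      then show "y \<in> {y \<in> {2..<x}. q y}" using A0 y by auto
    qed
  qed
  also have "\<dots> < card {y \<in> {2..x}. q y}"
  proof (rule psubset_card_mono)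
    show "finite {y \<in> {2..x}. q y}" by simp
    have "x \<in> {y \<in> {2..x}. q y}" "x \<notin> {y \<in> {2..<x}. q y}" using qx A0 by auto
    then show "{y \<in> {2..<x}. q y} \<subset> {y \<in> {2..x}. q y}" by auto
  qed
  also have "\<dots> \<le> (\<Sum>a\<in>{1..<x}. c a)" using A2[OF qx] .
  finally show False by simp
qed

lemma C2:
  assumes qx: "q x"
  shows "p x \<in> cnd c q x" "\<And>a. a \<in> cnd c q x \<Longrightarrow> a \<le> p x"
proof -
  have e: "p x = Max (cnd c q x)" using par_eq[of c q x] qx by simp
  show "p x \<in> cnd c q x" unfolding e using C1[OF qx] fin_cnd by (rule Max_in[rotated])
  show "\<And>a. a \<in> cnd c q x \<Longrightarrow> a \<le> p x" unfolding e using fin_cnd by simp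
qed

lemma C2':
  assumes qx: "q x"
  shows "1 \<le> p x \<and> p x < x \<and> card {y \<in> {1..<x}. p y = p x} < c (p x)"
  using C2(1)[OF qx] unfolding cnd_def by auto

lemma ch_prop: "y \<in> ch a \<Longrightarrow> 1 \<le> a \<and> a < y \<and> y \<le> m \<and> q y"
  unfolding ch_def using C2' A0 by fastforce

lemma fin_ch: "finite (ch a)"
  by (rule finite_subset[of _ "{..m}"]) (auto dest: ch_prop)

lemma C3:
  assumes a: "1 \<le> a"
  shows "card (ch a) \<le> c a"
proof (cases "ch a = {}")
  case True then show ?thesis by simp
next
  case False
  define y0 where "y0 = Max (ch a)"
  have y0: "y0 \<in> ch a" using False fin_ch unfolding y0_def by (rule Max_in[rotated])
  have sub: "ch a \<subseteq> insert y0 {y \<in> {1..<y0}. p y = a}"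
  proof
    fix y assume y: "y \<in> ch a"
    then have "y \<le> y0" using fin_ch unfolding y0_def by simp
    moreover have "1 \<le> y" using ch_prop[OF y] by simp
    ultimately show "y \<in> insert y0 {y \<in> {1..<y0}. p y = a}" using y unfolding ch_def by auto
  qed
  have "card (ch a) \<le> card (insert y0 {y \<in> {1..<y0}. p y = a})" by (rule card_mono[OF _ sub]) simp
  also have "\<dots> \<le> Suc (card {y \<in> {1..<y0}. p y = a})" by (rule card_insert_le_m1) auto
  also have "card {y \<in> {1..<y0}. p y = a} < c a"
    using C2'[of y0] y0 unfolding ch_def by auto
  finally show ?thesis by simp
qed

lemma ch_out: "a \<notin> {1..<m} \<Longrightarrow> ch a = {}"
  using ch_prop by fastforce

lemma C4: "card (ch a) = c a"
proof (cases "a \<in> {1..<m}")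
  case False
  then have "c a = 0" using A1 by fastforce
  then show ?thesis using ch_out[OF False] by simp
next
  case True
  have U: "(\<Union>a\<in>{1..<m}. ch a) = {y. q y}"
  proof
    show "(\<Union>a\<in>{1..<m}. ch a) \<subseteq> {y. q y}" unfolding ch_def by auto
    show "{y. q y} \<subseteq> (\<Union>a\<in>{1..<m}. ch a)"
    proof
      fix y assume "y \<in> {y. q y}"
      then have qy: "q y" by simp
      then have "p y \<in> {1..<m}" "y \<in> ch (p y)" using C2'[OF qy] A0[OF qy] unfolding ch_def by auto
      then show "y \<in> (\<Union>a\<in>{1..<m}. ch a)" by blast
    qed
  qed
  have S: "(\<Sum>a\<in>{1..<m}. card (ch a)) = (\<Sum>a\<in>{1..<m}. c a)"
  proof -
    have "(\<Sum>a\<in>{1..<m}. card (ch a)) = card (\<Union>a\<in>{1..<m}. ch a)"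
      apply (rule card_UN_disjoint[symmetric])
        apply simp
       apply (simp add: fin_ch)
      apply (auto simp: ch_def)
      done
    then show ?thesis using U A3 by simp
  qed
  have "\<not> card (ch a) < c a"
  proof
    assume lt: "card (ch a) < c a"
    have "(\<Sum>a\<in>{1..<m}. card (ch a)) < (\<Sum>a\<in>{1..<m}. c a)"
      by (rule sum_strict_mono_ex1) (use C3 lt True in auto)
    then show False using S by simp
  qed
  then show ?thesis using C3[of a] True by simp
qed

lemma C5:
  assumes qx: "q x" and h: "p x < b" "b < x" "x < d" "q d" "p d = b"
  shows False
proof -
  have b1: "1 \<le> b" using C2'[OF qx] h by simp
  have sub: "{y \<in> {1..<x}. p y = b} \<subset> ch b"
  proof
    show "{y \<in> {1..<x}. p y = b} \<subseteq> ch b" unfolding ch_def using C0 b1 by auto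
    have "d \<in> ch b" "d \<notin> {y \<in> {1..<x}. p y = b}" unfolding ch_def using h by auto
    then show "{y \<in> {1..<x}. p y = b} \<noteq> ch b" by blast
  qed
  have "card {y \<in> {1..<x}. p y = b} < card (ch b)" by (rule psubset_card_mono[OF fin_ch sub])
  then have "b \<in> cnd c q x" unfolding cnd_def using C4 b1 h by auto
  then show False using C2(2)[OF qx] h by fastforce
qed

definition mins :: "nat set" where "mins = {a \<in> {1..m}. \<not> q a \<or> 0 < c a}"
definition bl :: "nat \<Rightarrow> nat set" where "bl a = insert a (ch a)"
definition PI :: "nat set set" where "PI = bl ` mins"

lemma bl_min: "Min (bl a) = a"
  unfolding bl_def using fin_ch ch_prop by (intro Min_eqI) fastforce+

lemma bl_sub: "a \<in> mins \<Longrightarrow> bl a \<subseteq> {1..m}"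
  unfolding bl_def mins_def using ch_prop by fastforce

lemma par_min: "q x \<Longrightarrow> p x \<in> mins \<and> x \<in> ch (p x)"
  using C2'[of x] A0[of x] unfolding mins_def ch_def by auto

lemma card_bl: "card (bl a) = c a + 1"
proof -
  have "a \<notin> ch a" using ch_prop by fastforce
  then show ?thesis unfolding bl_def using fin_ch C4 by simp
qed

lemma chd_PI: "chd PI a x \<longleftrightarrow> a \<in> mins \<and> x \<in> ch a"
  unfolding chd_def PI_def using bl_min ch_prop unfolding bl_def by fastforce

lemma lp_PI: "linked_partition m PI"
  unfolding linked_partition_def
proof (intro conjI)
  show "\<forall>B\<in>PI. B \<noteq> {} \<and> B \<subseteq> {1..m}" unfolding PI_def using bl_sub by (auto simp: bl_def)
  show "\<Union> PI = {1..m}"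
  proof
    show "\<Union> PI \<subseteq> {1..m}" unfolding PI_def using bl_sub by auto
    show "{1..m} \<subseteq> \<Union> PI"
    proof
      fix x assume x: "x \<in> {1..m}"
      show "x \<in> \<Union> PI"
      proof (cases "q x")
        case True
        then show ?thesis using par_min[OF True] unfolding PI_def bl_def by blast
      next
        case False
        then have "x \<in> mins" using x unfolding mins_def by simp
        then show ?thesis unfolding PI_def bl_def by blast
      qed
    qed
  qed
  show "\<forall>B\<in>PI. \<forall>B'\<in>PI. B \<noteq> B' \<longrightarrow> nearly_disjoint B B'"
  proof (intro ballI impI)
    fix B B' assume B: "B \<in> PI" and B': "B' \<in> PI" and ne: "B \<noteq> B'"
    obtain a where a: "a \<in> mins" "B = bl a" using B unfolding PI_def by blast
    obtain b where b: "b \<in> mins" "B' = bl b" using B' unfolding PI_def by blast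
    have ab: "a \<noteq> b" using a b ne by auto
    have big: "1 < card (bl z)" if "z \<in> mins" "q z" for z
      using that card_bl unfolding mins_def by auto
    show "nearly_disjoint B B'" unfolding nearly_disjoint_def
    proof
      fix i assume i: "i \<in> B \<inter> B'"
      show "i = Min B \<and> 1 < card B \<and> i \<noteq> Min B' \<or> i = Min B' \<and> 1 < card B' \<and> i \<noteq> Min B"
      proof (cases "i = a")
        case True
        then have "i \<in> ch b" using i a b ab unfolding bl_def by auto
        then have "q a" using True unfolding ch_def by simp
        then show ?thesis using True big[OF a(1)] a b ab bl_min by auto
      next
        case False
        note F = False
        show ?thesis
        proof (cases "i = b")
          case True
          then have "i \<in> ch a" using i a b ab unfolding bl_def by auto
          then have "q b" using True unfolding ch_def by simp
          then show ?thesis using True big[OF b(1)] a b ab bl_min by auto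
        next
          case False
          then have "i \<in> ch a" "i \<in> ch b" using i a b F unfolding bl_def by auto
          then show ?thesis using ab unfolding ch_def by simp
        qed
      qed
    qed
  qed
qed

lemma nc_PI: "noncrossing PI"
  unfolding noncrossing_def
proof
  assume "\<exists>B\<in>PI. \<exists>B'\<in>PI. B \<noteq> B' \<and> (\<exists>a\<in>B. \<exists>c\<in>B. \<exists>b\<in>B'. \<exists>d\<in>B'. a < b \<and> b < c \<and> c < d)"
  then obtain a b a' c' b' d' where ab: "a \<in> mins" "b \<in> mins" "a \<noteq> b"
    and el: "a' \<in> bl a" "c' \<in> bl a" "b' \<in> bl b" "d' \<in> bl b" and o: "a' < b'" "b' < c'" "c' < d'"
    unfolding PI_def by blast
  have la: "a \<le> a'" using el(1) ch_prop unfolding bl_def by fastforce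
  have lb: "b \<le> b'" using el(3) ch_prop unfolding bl_def by fastforce
  have c': "c' \<in> ch a" using el(2) la o unfolding bl_def by auto
  have d': "d' \<in> ch b" using el(4) lb o unfolding bl_def by auto
  show False
  proof (cases "a < b")
    case True
    show False
      by (rule C5[of c' b d']) (use c' d' True lb o in \<open>auto simp: ch_def\<close>)
  next
    case False
    then have ba: "b < a" using ab by simp
    have b'': "b' \<in> ch b" using el(3) ba la o unfolding bl_def by auto
    show False
      by (rule C5[of b' a c']) (use b'' c' ba la o in \<open>auto simp: ch_def\<close>)
  qed
qed

lemma cnt_PI: "cnt PI j = c j"
proof -
  have "cnt PI j = card {x. chd PI j x}" using cnt_card[OF lp_PI] .
  also have "{x. chd PI j x} = (if j \<in> mins then ch j else {})" using chd_PI by auto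
  finally have e: "cnt PI j = card (if j \<in> mins then ch j else {})" .
  have z: "c j = 0" if "j \<notin> mins"
  proof (rule ccontr)
    assume "c j \<noteq> 0"
    then have "1 \<le> j \<and> j < m" using A1[of j] by simp
    then have "j \<in> mins" unfolding mins_def using \<open>c j \<noteq> 0\<close> by simp
    then show False using that by simp
  qed
  show ?thesis using e z C4[of j] by (cases "j \<in> mins") simp_all
qed

lemma scm_PI: "singly_covered_minimal PI j \<longleftrightarrow> j \<in> {1..m} \<and> \<not> q j"
  unfolding scm_iff[OF lp_PI] chd_PI using par_min unfolding ch_def by blast

end



lemma sum_shift1: "(\<Sum>i<(k::nat). f (i+1)) = (\<Sum>a\<in>{1..<k+1}. (f a::nat))"
proof (induct k)
  case 0 then show ?case by simp
next
  case (Suc k) then show ?case by simp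
qed

lemma card_shift2: "card {y \<in> {2..(k::nat)+1}. P y} = card {i. i < k \<and> P (i+2)}"
proof -
  have "{y \<in> {2..k+1}. P y} = (\<lambda>i. i+2) ` {i. i < k \<and> P (i+2)}"
  proof
    show "{y \<in> {2..k+1}. P y} \<subseteq> (\<lambda>i. i+2) ` {i. i < k \<and> P (i+2)}"
    proof
      fix y assume y: "y \<in> {y \<in> {2..k+1}. P y}"
      then have "y - 2 < k" "y - 2 + 2 = y" by auto
      then show "y \<in> (\<lambda>i. i+2) ` {i. i < k \<and> P (i+2)}" using y by (metis (mono_tags, lifting) image_eqI mem_Collect_eq)
    qed
  qed auto
  moreover have "inj_on (\<lambda>i. i+2) {i. i < k \<and> P (i+2)}" by (auto simp: inj_on_def)
  ultimately show ?thesis by (simp add: card_image)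
qed

lemma surj_part:
  assumes sp: "schroeder_path n p"
  shows "\<exists>\<pi>. noncrossing_linked_partition (n + 1) \<pi> \<and> phi n \<pi> = p"
proof -
  obtain c s where p: "p = enc c s n" using schroeder_enc_ex[OF sp] by blast
  have Yn: "ycoord (enc c s n) = n" and Yk: "\<forall>k<n. k + 1 \<le> ycoord (enc c s (Suc k))"
    using sp unfolding p schroeder_enc by blast+
  define c' where "c' a = (if 1 \<le> a \<and> a \<le> n then c a else 0)" for a
  define q where "q x = (2 \<le> x \<and> x \<le> n + 1 \<and> \<not> s x)" for x
  have sc: "(\<Sum>a\<in>{1..<k+1}. c' a) = (\<Sum>i<k. c (i+1))" if "k \<le> n" for k
    unfolding sum_shift1[of c k] c'_def using that by (intro sum.cong) auto
  have cq: "card {y \<in> {2..k+1}. q y} = card {i. i < k \<and> \<not> s (i+2)}" if "k \<le> n" for k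
    unfolding card_shift2 q_def using that by (intro arg_cong[where f=card]) auto
  interpret cons "n+1" c' q
  proof
    fix x assume "q x" then show "2 \<le> x \<and> x \<le> n + 1" unfolding q_def by simp
  next
    fix a assume "0 < c' a" then show "1 \<le> a \<and> a < n + 1" unfolding c'_def by (auto split: if_splits)
  next
    fix x assume qx: "q x"
    define k where "k = x - 2"
    have k: "k < n" "x = k + 2" using qx unfolding q_def k_def by auto
    have "k + 1 \<le> ycoord (enc c s (Suc k))" using Yk k by simp
    then have "k + 1 \<le> (\<Sum>i<k+1. c (i+1)) + card {i. i < k + 1 \<and> s (i+2)}" unfolding y_enc2 by simp
    moreover have "card {i. i < k + 1 \<and> s (i+2)} + card {i. i < k + 1 \<and> \<not> s (i+2)} = k + 1"
      by (rule card_split)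
    moreover have "card {y \<in> {2..x}. q y} = card {i. i < k + 1 \<and> \<not> s (i+2)}"
      using cq[of "k+1"] k by simp
    moreover have "(\<Sum>a\<in>{1..<x}. c' a) = (\<Sum>i<k+1. c (i+1))" using sc[of "k+1"] k by simp
    ultimately show "card {y \<in> {2..x}. q y} \<le> (\<Sum>a\<in>{1..<x}. c' a)" by linarith
  next
    have "n = (\<Sum>i<n. c (i+1)) + card {i. i < n \<and> s (i+2)}" using Yn unfolding y_enc2 by simp
    moreover have "card {i. i < n \<and> s (i+2)} + card {i. i < n \<and> \<not> s (i+2)} = n" by (rule card_split)
    moreover have "{y. q y} = {y \<in> {2..n+1}. q y}" unfolding q_def by auto
    ultimately show "(\<Sum>a\<in>{1..<n+1}. c' a) = card {y. q y}" using sc[of n] cq[of n] by simp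
  qed
  have "phi n PI = enc (cnt PI) (singly_covered_minimal PI) n" by (rule phi_enc)
  also have "\<dots> = enc c s n"
  proof (rule enc_cong)
    fix i assume "i < n"
    then show "cnt PI (i+1) = c (i+1) \<and> singly_covered_minimal PI (i+2) = s (i+2)"
      unfolding cnt_PI scm_PI c'_def q_def by simp
  qed
  finally have "phi n PI = p" using p by simp
  moreover have "noncrossing_linked_partition (n + 1) PI"
    unfolding noncrossing_linked_partition_def using lp_PI nc_PI by simp
  ultimately show ?thesis by blast
qed

theorem theorem2p4:
  fixes n :: nat
  shows "bij_betw (phi n) {\<pi>. noncrossing_linked_partition (n + 1) \<pi>}
                          {p. schroeder_path n p}"
  unfolding bij_betw_def
proof
  show "inj_on (phi n) {\<pi>. noncrossing_linked_partition (n + 1) \<pi>}"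
    unfolding inj_on_def noncrossing_linked_partition_def using phi_inj by blast
  show "phi n ` {\<pi>. noncrossing_linked_partition (n + 1) \<pi>} = {p. schroeder_path n p}"
  proof
    show "phi n ` {\<pi>. noncrossing_linked_partition (n + 1) \<pi>} \<subseteq> {p. schroeder_path n p}"
      unfolding noncrossing_linked_partition_def using phi_schroeder by blast
    show "{p. schroeder_path n p} \<subseteq> phi n ` {\<pi>. noncrossing_linked_partition (n + 1) \<pi>}"
      using surj_part by blast
  qed
qed


end
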